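(* Consider, for a parameter $a$, the ODE in $z$ $$a^2\bigl(z(1+A)^3-A\bigr)=(1+A)\,\delta_z^2A-(\delta_zA)^2,\qquad \delta_z=z\frac{d}{dz},$$ and the formal series $A(a,z)=\sum_{k=0}^\infty A_k(z)\,a^{-2k}$. There exists a unique sequence $(A_k(z))_{k\ge0}$ of functions holomorphic in the disc $|z|<\frac{2^2}{3^3}$ such that this series formally solves the ODE (i.e. the ODE holds identically after equating coefficients of each power of $a^2$). Moreover, all $A_k(z)$ are rational functions of $A_0(z)$, and $A_k(0)=0$ for all $k$. *)

theory Defs
  imports "HOL-Analysis.Analysis" "HOL-Computational_Algebra.Formal_Power_Series"
          "HOL-Computational_Algebra.Polynomial"
begin

definition euler_op :: "(complex \<Rightarrow> complex) \<Rightarrow> complex \<Rightarrow> complex" where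
  "euler_op f z = z * deriv f z"

text \<open>The formal series A(a,z) = sum_k A_k(z) a^(-2k) is encoded, for each fixed z,
  as a formal power series in the variable X = a^(-2).  Multiplying the ODE
  a^2 (z(1+A)^3 - A) = (1+A) delta^2 A - (delta A)^2 by X = a^(-2) gives
  z(1+A)^3 - A = X ((1+A) delta^2 A - (delta A)^2), to be read coefficientwise.\<close>
definition formally_solves_ODE :: "(nat \<Rightarrow> complex \<Rightarrow> complex) \<Rightarrow> real \<Rightarrow> bool" where
  "formally_solves_ODE A r \<longleftrightarrow>
     (\<forall>z \<in> ball 0 r.
        (let F  = Abs_fps (\<lambda>k. A k z);
             D1 = Abs_fps (\<lambda>k. euler_op (A k) z);
             D2 = Abs_fps (\<lambda>k. euler_op (euler_op (A k)) z)
         in fps_const z * (1 + F) ^ 3 - F = fps_X * ((1 + F) * D2 - D1 ^ 2)))"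

definition admissible :: "(nat \<Rightarrow> complex \<Rightarrow> complex) \<Rightarrow> bool" where
  "admissible A \<longleftrightarrow>
     (\<forall>k. A k holomorphic_on ball 0 (2^2 / 3^3)) \<and> formally_solves_ODE A (2^2 / 3^3)"

end

theory Submission
  imports Defs "HOL-Complex_Analysis.Conformal_Mappings"
begin

unbundle no vec_syntax
unbundle fps_syntax


primrec wit :: "nat \<Rightarrow> complex \<Rightarrow> complex" where
  "wit 0 z = 0"
| "wit (Suc n) z = z * (1 + wit n z) ^ 3"

lemma cube_diff_bound:
  fixes a b :: complex
  assumes "norm a \<le> 1/2" "norm b \<le> 1/2"
  shows "norm ((1+a)^3 - (1+b)^3) \<le> 27/4 * norm (a - b)"
proof -
  have e: "(1+a)^3 - (1+b)^3 = (a - b) * ((1+a)^2 + (1+a)*(1+b) + (1+b)^2)"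
    by (simp add: algebra_simps power2_eq_square power3_eq_cube)
  have na: "norm (1+a) \<le> 3/2" using norm_triangle_ineq[of 1 a] assms by simp
  have nb: "norm (1+b) \<le> 3/2" using norm_triangle_ineq[of 1 b] assms by simp
  have "norm ((1+a)^2 + (1+a)*(1+b) + (1+b)^2) \<le> norm ((1+a)^2) + norm ((1+a)*(1+b)) + norm ((1+b)^2)"
    by (meson norm_triangle_ineq order_trans add_mono order_refl)
  also have "\<dots> = norm (1+a)^2 + norm (1+a) * norm (1+b) + norm (1+b)^2"
    by (simp add: norm_mult norm_power)
  also have "\<dots> \<le> (3/2)^2 + (3/2)*(3/2) + (3/2)^2"
    using na nb by (intro add_mono power_mono mult_mono) auto
  finally have "norm ((1+a)^2 + (1+a)*(1+b) + (1+b)^2) \<le> 27/4" by (simp add: power2_eq_square)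
  then show ?thesis unfolding e norm_mult
    by (metis mult.commute mult_left_mono norm_ge_zero)
qed

lemma wit_bound: "norm z \<le> 4/27 \<Longrightarrow> norm (wit n z) \<le> 1/2"
proof (induction n)
  case 0 then show ?case by simp
next
  case (Suc n)
  have "norm (1 + wit n z) \<le> 3/2" using norm_triangle_ineq[of 1 "wit n z"] Suc by simp
  then have "norm (1 + wit n z)^3 \<le> (3/2)^3" by (intro power_mono) auto
  then have "norm z * norm (1 + wit n z)^3 \<le> 4/27 * (3/2)^3"
    using Suc by (intro mult_mono) auto
  then show ?case by (simp add: norm_mult norm_power power3_eq_cube)
qed

lemma wit_diff_bound:
  assumes "norm z \<le> r" "r \<le> 4/27"
  shows "norm (wit (Suc n) z - wit n z) \<le> 1/2 * (27/4*r)^n"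
proof (induction n)
  case 0 then show ?case using assms by simp
next
  case (Suc n)
  have z: "norm z \<le> 4/27" using assms by simp
  have "norm (wit (Suc (Suc n)) z - wit (Suc n) z) = norm z * norm ((1 + wit (Suc n) z)^3 - (1 + wit n z)^3)"
    by (simp only: wit.simps(2) norm_mult right_diff_distrib[symmetric])
  also have "\<dots> \<le> r * (27/4 * norm (wit (Suc n) z - wit n z))"
    by (intro mult_mono[OF assms(1) cube_diff_bound[OF wit_bound[OF z] wit_bound[OF z]]])
       (auto simp: order_trans[OF norm_ge_zero assms(1)])
  also have "\<dots> \<le> r * (27/4 * (1/2 * (27/4*r)^n))"
    using Suc by (intro mult_left_mono) (auto simp: order_trans[OF norm_ge_zero assms(1)])
  finally show ?case by (simp add: algebra_simps)
qed

lemma wit_holo: "wit n holomorphic_on S"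
  by (induction n) (auto intro!: holomorphic_intros)

lemma wit_telescope: "wit n z = (\<Sum>i<n. wit (Suc i) z - wit i z)"
  by (induction n) auto

definition g0 :: "complex \<Rightarrow> complex" where
  "g0 z = (\<Sum>i. wit (Suc i) z - wit i z)"

lemma wit_ulim:
  assumes "0 \<le> r" "r < 4/27"
  shows "uniform_limit (cball 0 r) wit g0 sequentially"
proof -
  have "uniform_limit (cball 0 r) (\<lambda>n z. \<Sum>i<n. wit (Suc i) z - wit i z) g0 sequentially"
    unfolding g0_def
    by (rule Weierstrass_m_test[where M="\<lambda>n. 1/2 * (27/4*r)^n"])
       (use assms wit_diff_bound in \<open>auto intro!: summable_mult summable_geometric\<close>)
  moreover have "(\<lambda>n z. \<Sum>i<n. wit (Suc i) z - wit i z) = wit"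
    by (intro ext) (rule wit_telescope[symmetric])
  ultimately show ?thesis by simp
qed

lemma wit_lim: "norm z < 4/27 \<Longrightarrow> (\<lambda>n. wit n z) \<longlonglongrightarrow> g0 z"
  using tendsto_uniform_limitI[OF wit_ulim[of "norm z"]] by auto

lemma g0_holo: "g0 holomorphic_on ball 0 (4/27)"
proof (rule holomorphic_uniform_sequence[where f=wit])
  fix x :: complex assume x: "x \<in> ball 0 (4/27)"
  define d where "d = (4/27 - norm x)/2"
  have d: "d > 0" using x by (simp add: d_def)
  have sub: "cball x d \<subseteq> cball 0 (norm x + d)"
    by (auto simp: dist_norm) (metis add.commute add_le_cancel_left norm_minus_commute norm_triangle_sub order_trans)
  have "norm y < 4/27" if "norm y \<le> norm x + d" for y :: complex
  proof -
    have "norm x < 4/27" using x by simp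
    then show ?thesis using that unfolding d_def by (simp add: field_simps)
  qed
  then have "cball (0::complex) (norm x + d) \<subseteq> ball 0 (4/27)" by (auto simp: dist_norm)
  moreover have "uniform_limit (cball x d) wit g0 sequentially"
  proof -
    have "norm x < 4/27" using x by simp
    then have "norm x + d < 4/27" unfolding d_def by (simp add: field_simps)
    then show ?thesis using uniform_limit_on_subset[OF wit_ulim[of "norm x + d"] sub] d by auto
  qed
  ultimately show "\<exists>d>0. cball x d \<subseteq> ball 0 (4/27) \<and> uniform_limit (cball x d) wit g0 sequentially"
    using d sub by blast
qed (auto simp: wit_holo)

lemma g0_eq: "norm z < 4/27 \<Longrightarrow> g0 z = z * (1 + g0 z)^3"
proof -
  assume z: "norm z < 4/27"
  have "(\<lambda>n. wit (Suc n) z) \<longlonglongrightarrow> g0 z" using wit_lim[OF z] by (rule LIMSEQ_Suc)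
  moreover have "(\<lambda>n. wit (Suc n) z) \<longlonglongrightarrow> z * (1 + g0 z)^3"
    unfolding wit.simps by (intro tendsto_intros wit_lim[OF z])
  ultimately show ?thesis by (rule LIMSEQ_unique)
qed

lemma g0_bound: "norm z < 4/27 \<Longrightarrow> norm (g0 z) \<le> 1/2"
proof -
  assume z: "norm z < 4/27"
  have "(\<lambda>n. norm (wit n z)) \<longlonglongrightarrow> norm (g0 z)" by (intro tendsto_intros wit_lim[OF z])
  then show ?thesis
    by (rule tendsto_upperbound) (use wit_bound z in auto)
qed

lemma root_unique:
  assumes "norm z < 4/27" "norm b \<le> 1/2" "b = z * (1 + b)^3"
  shows "b = g0 z"
proof (rule ccontr)
  assume ne: "b \<noteq> g0 z"
  have "norm (b - g0 z) = norm z * norm ((1+b)^3 - (1 + g0 z)^3)"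
    using assms(3) g0_eq[OF assms(1)]
    by (metis norm_mult right_diff_distrib)
  also have "\<dots> \<le> norm z * (27/4 * norm (b - g0 z))"
    using cube_diff_bound[OF assms(2) g0_bound[OF assms(1)]] by (intro mult_left_mono) auto
  also have "\<dots> < 4/27 * (27/4 * norm (b - g0 z))"
    using ne assms(1) by (intro mult_strict_right_mono) auto
  finally show False by simp
qed




definition FA :: "(nat \<Rightarrow> complex \<Rightarrow> complex) \<Rightarrow> complex \<Rightarrow> complex fps" where
  "FA A z = Abs_fps (\<lambda>k. A k z)"
definition D1A :: "(nat \<Rightarrow> complex \<Rightarrow> complex) \<Rightarrow> complex \<Rightarrow> complex fps" where
  "D1A A z = Abs_fps (\<lambda>k. euler_op (A k) z)"
definition D2A :: "(nat \<Rightarrow> complex \<Rightarrow> complex) \<Rightarrow> complex \<Rightarrow> complex fps" where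
  "D2A A z = Abs_fps (\<lambda>k. euler_op (euler_op (A k)) z)"
definition LHS :: "(nat \<Rightarrow> complex \<Rightarrow> complex) \<Rightarrow> complex \<Rightarrow> complex fps" where
  "LHS A z = fps_const z * (1 + FA A z) ^ 3 - FA A z"
definition RHS :: "(nat \<Rightarrow> complex \<Rightarrow> complex) \<Rightarrow> complex \<Rightarrow> complex fps" where
  "RHS A z = (1 + FA A z) * D2A A z - (D1A A z) ^ 2"

lemma solves_iff:
  "formally_solves_ODE A r \<longleftrightarrow>
     (\<forall>z\<in>ball 0 r. LHS A z $ 0 = 0 \<and> (\<forall>k. LHS A z $ Suc k = RHS A z $ k))"
proof -
  have "(LHS A z = fps_X * RHS A z) \<longleftrightarrow> (LHS A z $ 0 = 0 \<and> (\<forall>k. LHS A z $ Suc k = RHS A z $ k))" for z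
  proof
    assume "LHS A z = fps_X * RHS A z" then show "LHS A z $ 0 = 0 \<and> (\<forall>k. LHS A z $ Suc k = RHS A z $ k)"
      by simp
  next
    assume a: "LHS A z $ 0 = 0 \<and> (\<forall>k. LHS A z $ Suc k = RHS A z $ k)"
    show "LHS A z = fps_X * RHS A z"
    proof (rule fps_ext)
      fix n show "LHS A z $ n = (fps_X * RHS A z) $ n" using a by (cases n) auto
    qed
  qed
  then show ?thesis
    unfolding formally_solves_ODE_def Let_def LHS_def RHS_def FA_def D1A_def D2A_def by simp
qed

definition agree :: "nat \<Rightarrow> 'a::comm_ring_1 fps \<Rightarrow> 'a fps \<Rightarrow> bool" where
  "agree n f g \<longleftrightarrow> (\<forall>i\<le>n. f $ i = g $ i)"

lemma agree_refl: "agree n f f" by (simp add: agree_def)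

lemma agree_add: "agree n f f' \<Longrightarrow> agree n g g' \<Longrightarrow> agree n (f + g) (f' + g')"
  by (simp add: agree_def)

lemma agree_diff: "agree n f f' \<Longrightarrow> agree n g g' \<Longrightarrow> agree n (f - g) (f' - g')"
  by (simp add: agree_def)

lemma agree_mult: "agree n f f' \<Longrightarrow> agree n g g' \<Longrightarrow> agree n (f * g) (f' * g')"
  unfolding agree_def fps_mult_nth
  by (auto intro!: sum.cong)

lemma agree_power: "agree n f f' \<Longrightarrow> agree n (f ^ m) (f' ^ m)"
  by (induction m) (auto intro: agree_mult agree_refl)

lemma LHS_agree:
  assumes "\<And>j. j \<le> n \<Longrightarrow> A j z = B j z"
  shows "LHS A z $ n = LHS B z $ n"
proof -
  have a: "agree n (FA A z) (FA B z)" using assms by (simp add: agree_def FA_def)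
  have "agree n (LHS A z) (LHS B z)" unfolding LHS_def
    by (intro agree_diff agree_mult agree_power agree_add agree_refl a)
  then show ?thesis by (simp add: agree_def)
qed

lemma RHS_agree:
  assumes "\<And>j. j \<le> n \<Longrightarrow> A j z = B j z"
      and "\<And>j. j \<le> n \<Longrightarrow> euler_op (A j) z = euler_op (B j) z"
      and "\<And>j. j \<le> n \<Longrightarrow> euler_op (euler_op (A j)) z = euler_op (euler_op (B j)) z"
  shows "RHS A z $ n = RHS B z $ n"
proof -
  have a: "agree n (FA A z) (FA B z)" using assms by (simp add: agree_def FA_def)
  have b: "agree n (D1A A z) (D1A B z)" using assms by (simp add: agree_def D1A_def)
  have c: "agree n (D2A A z) (D2A B z)" using assms by (simp add: agree_def D2A_def)
  have "agree n (RHS A z) (RHS B z)" unfolding RHS_def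
    by (intro agree_diff agree_mult agree_power agree_add agree_refl a b c)
  then show ?thesis by (simp add: agree_def)
qed

lemma mult_low_zero:
  fixes f G :: "'a::comm_ring_1 fps"
  assumes "\<And>i. i \<le> k \<Longrightarrow> G $ i = 0"
  shows "(f * G) $ Suc k = f $ 0 * G $ Suc k"
proof -
  have "(f * G) $ Suc k = (\<Sum>i\<in>insert 0 {1..Suc k}. f $ i * G $ (Suc k - i))"
    unfolding fps_mult_nth by (rule sum.cong) auto
  also have "\<dots> = f $ 0 * G $ Suc k + (\<Sum>i\<in>{1..Suc k}. f $ i * G $ (Suc k - i))"
    by (subst sum.insert) auto
  also have "(\<Sum>i\<in>{1..Suc k}. f $ i * G $ (Suc k - i)) = 0"
    by (rule sum.neutral) (auto simp: assms)
  finally show ?thesis by simp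
qed

lemma mult_low_zero':
  fixes f G :: "'a::comm_ring_1 fps"
  assumes "\<And>i. i \<le> k \<Longrightarrow> G $ i = 0" "n \<le> k"
  shows "(f * G) $ n = 0"
  unfolding fps_mult_nth using assms by (intro sum.neutral) auto

lemma cube_coeff:
  fixes h G :: "'a::comm_ring_1 fps"
  assumes "\<And>i. i \<le> k \<Longrightarrow> G $ i = 0"
  shows "((h + G) ^ 3) $ Suc k = (h ^ 3) $ Suc k + 3 * (h $ 0)^2 * G $ Suc k"
proof -
  have e: "(h + G) ^ 3 = h ^ 3 + (3 * h^2) * G + (3 * h + G) * (G * G)"
    by (simp add: algebra_simps power2_eq_square power3_eq_cube)
  have GG: "(G * G) $ i = 0" if "i \<le> Suc k" for i
  proof (cases "i \<le> k")
    case True then show ?thesis using mult_low_zero'[OF assms] by blast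
  next
    case False then have "i = Suc k" using that by simp
    then show ?thesis using mult_low_zero[where f=G, OF assms] assms[of 0] by simp
  qed
  have "((3 * h + G) * (G * G)) $ Suc k = 0"
    using mult_low_zero'[OF GG, of "Suc k"] by auto
  moreover have "((3 * h^2) * G) $ Suc k = 3 * (h $ 0)^2 * G $ Suc k"
    using mult_low_zero[OF assms] by (simp add: fps_nth_power_0)
  ultimately show ?thesis unfolding e by simp
qed

definition trunc :: "nat \<Rightarrow> (nat \<Rightarrow> complex \<Rightarrow> complex) \<Rightarrow> nat \<Rightarrow> complex \<Rightarrow> complex" where
  "trunc k A = (\<lambda>j. if j \<le> k then A j else (\<lambda>z. 0))"

lemma LHS_step:
  "LHS A z $ Suc k = LHS (trunc k A) z $ Suc k + (3 * z * (1 + A 0 z)^2 - 1) * A (Suc k) z"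
proof -
  define F where "F = FA A z"
  define F' where "F' = FA (trunc k A) z"
  define G where "G = F - F'"
  have G0: "G $ i = 0" if "i \<le> k" for i
    using that by (simp add: G_def F_def F'_def FA_def trunc_def)
  have GS: "G $ Suc k = A (Suc k) z" by (simp add: G_def F_def F'_def FA_def trunc_def)
  have F'S: "F' $ Suc k = 0" by (simp add: F'_def FA_def trunc_def)
  have h0: "(1 + F') $ 0 = 1 + A 0 z" by (simp add: F'_def FA_def trunc_def)
  have e1: "1 + F = (1 + F') + G" by (simp add: G_def)
  have c: "((1+F') + G)^3 $ Suc k = ((1 + F') ^ 3) $ Suc k + 3 * ((1 + F') $ 0)^2 * G $ Suc k"
    by (rule cube_coeff) (rule G0)
  have "LHS A z $ Suc k = z * (((1 + F') ^ 3) $ Suc k + 3 * ((1 + F') $ 0)^2 * G $ Suc k) - F $ Suc k"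
    unfolding LHS_def F_def[symmetric] e1 using c by simp
  moreover have "LHS (trunc k A) z $ Suc k = z * ((1 + F') ^ 3) $ Suc k"
    unfolding LHS_def F'_def[symmetric] using F'S by simp
  moreover have "F $ Suc k = A (Suc k) z" by (simp add: F_def FA_def)
  ultimately show ?thesis unfolding h0 GS by (simp add: algebra_simps)
qed




abbreviation BB :: "complex set" where "BB \<equiv> ball 0 (4/27)"

lemma g0_facts:
  assumes "z \<in> BB"
  shows "g0 z = z * (1 + g0 z)^3" "norm (g0 z) \<le> 1/2" "1 + g0 z \<noteq> 0" "1 - 2 * g0 z \<noteq> 0"
    "z = g0 z / (1 + g0 z)^3"
proof -
  have z: "norm z < 4/27" using assms by simp
  show e: "g0 z = z * (1 + g0 z)^3" by (rule g0_eq[OF z])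
  show b: "norm (g0 z) \<le> 1/2" by (rule g0_bound[OF z])
  show n1: "1 + g0 z \<noteq> 0"
  proof
    assume "1 + g0 z = 0" then have "g0 z = -1" by (simp add: add_eq_0_iff)
    with b show False by simp
  qed
  show ez: "z = g0 z / (1 + g0 z)^3" using e n1 by (simp add: field_simps)
  show "1 - 2 * g0 z \<noteq> 0"
  proof
    assume "1 - 2 * g0 z = 0" then have g12: "g0 z = 1/2" by (simp add: field_simps)
    have "z = (1/2) / (1 + 1/2)^3" using ez unfolding g12 .
    then have "z = 4/27" by (simp add: power3_eq_cube)
    with z show False by simp
  qed
qed

lemma g0_deriv: "z \<in> BB \<Longrightarrow> (g0 has_field_derivative deriv g0 z) (at z)"
  using holomorphic_derivI[OF g0_holo] by auto

lemma zg0': assumes "z \<in> BB"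
  shows "z * deriv g0 z = g0 z * (1 + g0 z) / (1 - 2 * g0 z)"
proof -
  define g where "g = g0 z"
  define g' where "g' = deriv g0 z"
  note f = g0_facts[OF assms, folded g_def]
  have "((\<lambda>w. w * (1 + g0 w)^3) has_field_derivative ((1 + g0 z)^3 + 3 * z * (1 + g0 z)^2 * deriv g0 z))
        (at z)"
    apply (rule derivative_eq_intros g0_deriv[OF assms] refl)+
    by (simp add: algebra_simps)
  then have d: "deriv (\<lambda>w. w * (1 + g0 w)^3) z = (1 + g)^3 + 3 * z * (1 + g)^2 * g'"
    unfolding g_def g'_def by (rule DERIV_imp_deriv)
  have "eventually (\<lambda>w. g0 w = w * (1 + g0 w)^3) (nhds z)"
    using eventually_nhds_in_open[OF open_ball assms] by eventually_elim (rule g0_facts(1))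
  then have "g' = deriv (\<lambda>w. w * (1 + g0 w)^3) z" unfolding g'_def by (rule deriv_cong_ev) simp
  then have e1: "g' * (1 - 3 * z * (1 + g)^2) = (1 + g)^3" using d by (simp add: algebra_simps)
  have "z * g' * (1 - 2 * g) = z * g' * ((1 + g) - 3 * (z * (1 + g)^3))"
    using f(1) by (simp add: algebra_simps)
  also have "\<dots> = z * (1 + g) * (g' * (1 - 3 * z * (1 + g)^2))"
    by (simp add: algebra_simps power2_eq_square power3_eq_cube)
  also have "\<dots> = (z * (1 + g)^3) * (1 + g)" unfolding e1 by (simp add: algebra_simps power3_eq_cube)
  also have "\<dots> = g * (1 + g)" using f(1) by simp
  finally have "z * g' * (1 - 2 * g) = g * (1 + g)" .
  then have "z * g' = g * (1 + g) / (1 - 2 * g)" using f(4) by (simp add: eq_divide_eq)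
  then show ?thesis unfolding g_def g'_def .
qed

definition ratA :: "(complex \<Rightarrow> complex) \<Rightarrow> bool" where
  "ratA h \<longleftrightarrow> (\<exists>p q. \<forall>z\<in>BB. poly q (g0 z) \<noteq> 0 \<and> h z = poly p (g0 z) / poly q (g0 z))"

lemma ratA_I: "(\<And>z. z \<in> BB \<Longrightarrow> poly q (g0 z) \<noteq> 0 \<and> h z = poly p (g0 z) / poly q (g0 z)) \<Longrightarrow> ratA h"
  unfolding ratA_def by blast

lemma ratA_cong: "ratA h \<Longrightarrow> (\<And>z. z \<in> BB \<Longrightarrow> h z = h' z) \<Longrightarrow> ratA h'"
  unfolding ratA_def by metis

lemma ratA_const: "ratA (\<lambda>z. c)"
  by (rule ratA_I[where p="[:c:]" and q=1]) simp

lemma ratA_g0: "ratA g0"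
  by (rule ratA_I[where p="[:0,1:]" and q=1]) simp

lemma ratA_id: "ratA (\<lambda>z. z)"
proof (rule ratA_I[where p="[:0,1:]" and q="[:1,1:]^3"])
  fix z assume z: "z \<in> BB"
  show "poly ([:1, 1:] ^ 3) (g0 z) \<noteq> 0 \<and> z = poly [:0, 1:] (g0 z) / poly ([:1, 1:] ^ 3) (g0 z)"
    using g0_facts[OF z] by (simp add: add.commute)
qed

lemma ratA_add: assumes "ratA f" "ratA h" shows "ratA (\<lambda>z. f z + h z)"
proof -
  obtain p q where f: "\<forall>z\<in>BB. poly q (g0 z) \<noteq> 0 \<and> f z = poly p (g0 z) / poly q (g0 z)"
    using assms(1) ratA_def by auto
  obtain p' q' where h: "\<forall>z\<in>BB. poly q' (g0 z) \<noteq> 0 \<and> h z = poly p' (g0 z) / poly q' (g0 z)"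
    using assms(2) ratA_def by auto
  show ?thesis
    by (rule ratA_I[where p="p * q' + p' * q" and q="q * q'"]) (use f h in \<open>auto simp: field_simps\<close>)
qed

lemma ratA_mult: assumes "ratA f" "ratA h" shows "ratA (\<lambda>z. f z * h z)"
proof -
  obtain p q where f: "\<forall>z\<in>BB. poly q (g0 z) \<noteq> 0 \<and> f z = poly p (g0 z) / poly q (g0 z)"
    using assms(1) ratA_def by auto
  obtain p' q' where h: "\<forall>z\<in>BB. poly q' (g0 z) \<noteq> 0 \<and> h z = poly p' (g0 z) / poly q' (g0 z)"
    using assms(2) ratA_def by auto
  show ?thesis
    by (rule ratA_I[where p="p * p'" and q="q * q'"]) (use f h in \<open>auto simp: field_simps\<close>)
qed

lemma ratA_minus: assumes "ratA f" shows "ratA (\<lambda>z. - f z)"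
  using ratA_mult[OF ratA_const[of "-1"] assms] by simp

lemma ratA_diff: assumes "ratA f" "ratA h" shows "ratA (\<lambda>z. f z - h z)"
  using ratA_add[OF assms(1) ratA_minus[OF assms(2)]] by simp

lemma ratA_divide: assumes "ratA f" "ratA h" "\<And>z. z \<in> BB \<Longrightarrow> h z \<noteq> 0"
  shows "ratA (\<lambda>z. f z / h z)"
proof -
  obtain p q where f: "\<forall>z\<in>BB. poly q (g0 z) \<noteq> 0 \<and> f z = poly p (g0 z) / poly q (g0 z)"
    using assms(1) ratA_def by auto
  obtain p' q' where h: "\<forall>z\<in>BB. poly q' (g0 z) \<noteq> 0 \<and> h z = poly p' (g0 z) / poly q' (g0 z)"
    using assms(2) ratA_def by auto
  show ?thesis
  proof (rule ratA_I[where p="p * q'" and q="q * p'"])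
    fix z assume z: "z \<in> BB"
    have "poly p' (g0 z) \<noteq> 0" using h assms(3)[OF z] z by auto
    then show "poly (q * p') (g0 z) \<noteq> 0 \<and> f z / h z = poly (p * q') (g0 z) / poly (q * p') (g0 z)"
      using f h z by (auto simp: field_simps)
  qed
qed

lemma ratA_power: assumes "ratA f" shows "ratA (\<lambda>z. f z ^ n)"
  by (induction n) (auto intro: ratA_const ratA_mult[OF assms, simplified])

lemma ratA_sum: assumes "\<And>i. i \<in> I \<Longrightarrow> ratA (f i)" shows "ratA (\<lambda>z. \<Sum>i\<in>I. f i z)"
  using assms
proof (induction I rule: infinite_finite_induct)
  case (infinite A) then show ?case by (simp add: ratA_const)
next
  case empty then show ?case by (simp add: ratA_const)
next
  case (insert x F) then show ?case by (simp add: ratA_add)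
qed

lemma ratA_holo: assumes "ratA h" shows "h holomorphic_on BB"
proof -
  obtain p q where f: "\<forall>z\<in>BB. poly q (g0 z) \<noteq> 0 \<and> h z = poly p (g0 z) / poly q (g0 z)"
    using assms(1) ratA_def by auto
  have "(\<lambda>z. poly p (g0 z) / poly q (g0 z)) holomorphic_on BB"
    using f by (intro holomorphic_intros g0_holo) auto
  then show ?thesis by (rule holomorphic_transform) (use f in auto)
qed

lemma ratA_euler: assumes "ratA h" shows "ratA (euler_op h)"
proof -
  obtain p q where f: "\<forall>z\<in>BB. poly q (g0 z) \<noteq> 0 \<and> h z = poly p (g0 z) / poly q (g0 z)"
    using assms(1) ratA_def by auto
  show ?thesis
  proof (rule ratA_I[where p="[:0,1:] * [:1,1:] * (pderiv p * q - p * pderiv q)" and q="[:1,-2:] * q * q"])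
    fix z assume z: "z \<in> BB"
    note gf = g0_facts[OF z]
    define g where "g = g0 z"
    define g' where "g' = deriv g0 z"
    have qn: "poly q g \<noteq> 0" using f z by (simp add: g_def)
    have "((\<lambda>w. poly p (g0 w) / poly q (g0 w)) has_field_derivative
          ((poly (pderiv p) (g0 z) * g') * poly q (g0 z) - poly p (g0 z) * (poly (pderiv q) (g0 z) * g')) / (poly q (g0 z) * poly q (g0 z))) (at z)"
      unfolding g'_def using qn unfolding g_def
      by (intro DERIV_divide DERIV_chain'[OF g0_deriv[OF z]] poly_DERIV) auto
    then have d: "deriv (\<lambda>w. poly p (g0 w) / poly q (g0 w)) z =
          ((poly (pderiv p) g * g') * poly q g - poly p g * (poly (pderiv q) g * g')) / (poly q g * poly q g)"
      unfolding g_def by (rule DERIV_imp_deriv)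
    have "eventually (\<lambda>w. h w = poly p (g0 w) / poly q (g0 w)) (nhds z)"
      using eventually_nhds_in_open[OF open_ball z] by eventually_elim (use f in auto)
    then have "deriv h z = deriv (\<lambda>w. poly p (g0 w) / poly q (g0 w)) z" by (rule deriv_cong_ev) simp
    then have "euler_op h z = (z * g') * (poly (pderiv p) g * poly q g - poly p g * poly (pderiv q) g) / (poly q g * poly q g)"
      unfolding euler_op_def d by (simp add: algebra_simps)
    also have "z * g' = g * (1 + g) / (1 - 2 * g)" unfolding g_def g'_def by (rule zg0'[OF z])
    finally have "euler_op h z = g * (1 + g) / (1 - 2 * g) * (poly (pderiv p) g * poly q g - poly p g * poly (pderiv q) g) / (poly q g * poly q g)" .
    moreover have "1 - 2 * g \<noteq> 0" using gf unfolding g_def by simp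
    ultimately show "poly ([:1, - 2:] * q * q) (g0 z) \<noteq> 0 \<and>
         euler_op h z = poly ([:0, 1:] * [:1, 1:] * (pderiv p * q - p * pderiv q)) (g0 z) / poly ([:1, - 2:] * q * q) (g0 z)"
      using qn unfolding g_def[symmetric] by (simp add: field_simps)
  qed
qed




definition ratF :: "(complex \<Rightarrow> complex fps) \<Rightarrow> bool" where
  "ratF f \<longleftrightarrow> (\<forall>n. ratA (\<lambda>z. f z $ n))"

lemma ratF_one: "ratF (\<lambda>z. 1)"
  unfolding ratF_def by (auto simp: ratA_const)

lemma ratF_fconst: "ratF (\<lambda>z. fps_const z)"
  unfolding ratF_def
proof
  fix n show "ratA (\<lambda>z. fps_const z $ n)" by (cases "n = 0") (auto simp: ratA_const ratA_id)
qed

lemma ratF_add: "ratF f \<Longrightarrow> ratF h \<Longrightarrow> ratF (\<lambda>z. f z + h z)"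
  unfolding ratF_def by (auto intro: ratA_add)

lemma ratF_diff: "ratF f \<Longrightarrow> ratF h \<Longrightarrow> ratF (\<lambda>z. f z - h z)"
  unfolding ratF_def by (auto intro: ratA_diff)

lemma ratF_mult: "ratF f \<Longrightarrow> ratF h \<Longrightarrow> ratF (\<lambda>z. f z * h z)"
  unfolding ratF_def fps_mult_nth by (auto intro!: ratA_sum ratA_mult)

lemma ratF_power: "ratF f \<Longrightarrow> ratF (\<lambda>z. f z ^ n)"
  by (induction n) (auto intro: ratF_mult ratF_one)

lemma ratF_LHS: "(\<And>n. ratA (A n)) \<Longrightarrow> ratF (LHS A)"
proof -
  assume a: "\<And>n. ratA (A n)"
  have F: "ratF (FA A)" unfolding ratF_def FA_def using a by simp
  have "ratF (\<lambda>z. fps_const z * (1 + FA A z) ^ 3 - FA A z)"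
    by (intro ratF_diff ratF_mult ratF_power ratF_add ratF_fconst ratF_one F)
  then show ?thesis unfolding LHS_def[abs_def] .
qed

lemma ratF_RHS: "(\<And>n. ratA (A n)) \<Longrightarrow> ratF (RHS A)"
proof -
  assume a: "\<And>n. ratA (A n)"
  have F: "ratF (FA A)" unfolding ratF_def FA_def using a by simp
  have D1: "ratF (D1A A)" unfolding ratF_def D1A_def using a by (simp add: ratA_euler)
  have D2: "ratF (D2A A)" unfolding ratF_def D2A_def using a by (simp add: ratA_euler)
  have "ratF (\<lambda>z. (1 + FA A z) * D2A A z - (D1A A z) ^ 2)"
    by (intro ratF_diff ratF_mult ratF_power ratF_add ratF_one F D1 D2)
  then show ?thesis unfolding RHS_def[abs_def] .
qed

lemma den_ne: assumes "z \<in> BB" shows "3 * z * (1 + g0 z)^2 - 1 \<noteq> 0"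
proof
  assume h: "3 * z * (1 + g0 z)^2 - 1 = 0"
  note f = g0_facts[OF assms]
  have "3 * (z * (1 + g0 z)^3) = (3 * z * (1 + g0 z)^2) * (1 + g0 z)"
    by (simp add: algebra_simps power2_eq_square power3_eq_cube)
  also have "\<dots> = 1 + g0 z" using h by simp
  finally have "3 * g0 z = 1 + g0 z" using f(1) by simp
  then have "1 - 2 * g0 z = 0" by (simp add: algebra_simps)
  with f(4) show False by simp
qed

lemma LHS_0: "LHS A z $ 0 = z * (1 + A 0 z)^3 - A 0 z"
  by (simp add: LHS_def FA_def fps_nth_power_0)

definition newf :: "(nat \<Rightarrow> complex \<Rightarrow> complex) \<Rightarrow> nat \<Rightarrow> complex \<Rightarrow> complex" where
  "newf P k z = (RHS P z $ k - LHS P z $ Suc k) / (3 * z * (1 + P 0 z)^2 - 1)"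

primrec TT :: "nat \<Rightarrow> nat \<Rightarrow> complex \<Rightarrow> complex" where
  "TT 0 = (\<lambda>j. if j = 0 then g0 else (\<lambda>z. 0))"
| "TT (Suc k) = (TT k)(Suc k := newf (TT k) k)"

definition SS :: "nat \<Rightarrow> complex \<Rightarrow> complex" where
  "SS k = TT k k"

lemma TT_eq: "TT k = trunc k SS"
proof (induction k)
  case 0 show ?case by (auto simp: trunc_def SS_def)
next
  case (Suc k)
  show ?case
  proof
    fix j show "TT (Suc k) j = trunc (Suc k) SS j"
      using Suc by (auto simp: trunc_def SS_def)
  qed
qed

lemma SS_0: "SS 0 = g0" by (simp add: SS_def)

lemma SS_Suc: "SS (Suc k) = newf (trunc k SS) k"
  by (simp add: SS_def TT_eq[symmetric])

lemma ratA_SS: "ratA (SS k)"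
proof (induction k rule: less_induct)
  case (less k)
  show ?case
  proof (cases k)
    case 0 then show ?thesis by (simp add: SS_0 ratA_g0)
  next
    case (Suc m)
    have T: "ratA (trunc m SS n)" for n
      using less Suc by (auto simp: trunc_def ratA_const)
    have "ratA (\<lambda>z. (RHS (trunc m SS) z $ m - LHS (trunc m SS) z $ Suc m) / (3 * z * (1 + g0 z)^2 - 1))"
      using ratF_RHS[OF T] ratF_LHS[OF T] den_ne unfolding ratF_def
      by (intro ratA_divide ratA_diff ratA_mult ratA_const ratA_id ratA_power ratA_add ratA_g0) auto
    then show ?thesis unfolding Suc SS_Suc newf_def[abs_def]
      by (simp add: trunc_def SS_0)
  qed
qed

lemma SS_solves: "formally_solves_ODE SS (4/27)"
  unfolding solves_iff
proof (intro ballI conjI allI)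
  fix z :: complex assume z: "z \<in> ball 0 (4/27)"
  show "LHS SS z $ 0 = 0" using g0_facts(1)[OF z] by (simp add: LHS_0 SS_0)
  fix k
  have "LHS SS z $ Suc k = LHS (trunc k SS) z $ Suc k + (3 * z * (1 + g0 z)^2 - 1) * SS (Suc k) z"
    using LHS_step[of SS z k] by (simp add: SS_0)
  also have "\<dots> = RHS (trunc k SS) z $ k"
    using den_ne[OF z] unfolding SS_Suc newf_def by (simp add: trunc_def SS_0)
  also have "\<dots> = RHS SS z $ k"
    by (rule RHS_agree) (auto simp: trunc_def)
  finally show "LHS SS z $ Suc k = RHS SS z $ k" .
qed

lemma r_eq: "(2^2 / 3^3 :: real) = 4/27" by simp

lemma SS_admissible: "admissible SS"
  unfolding admissible_def r_eq using SS_solves ratA_holo[OF ratA_SS] by blast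

lemma euler_cong: "(\<And>w. w \<in> BB \<Longrightarrow> f w = h w) \<Longrightarrow> z \<in> BB \<Longrightarrow> euler_op f z = euler_op h z"
proof -
  assume a: "\<And>w. w \<in> BB \<Longrightarrow> f w = h w" and z: "z \<in> BB"
  have "eventually (\<lambda>w. f w = h w) (nhds z)"
    using eventually_nhds_in_open[OF open_ball z] by eventually_elim (use a in auto)
  then have "deriv f z = deriv h z" by (rule deriv_cong_ev) simp
  then show ?thesis by (simp add: euler_op_def)
qed

lemma unique0:
  assumes "admissible B"
  shows "\<And>z. z \<in> BB \<Longrightarrow> B 0 z = g0 z"
proof -
  have hol: "B 0 holomorphic_on BB" and sol: "formally_solves_ODE B (4/27)"
    using assms unfolding admissible_def r_eq by auto
  have eq: "B 0 z = z * (1 + B 0 z)^3" if "z \<in> BB" for z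
    using sol that unfolding solves_iff LHS_0 by auto
  have B00: "B 0 0 = 0" using eq[of 0] by simp
  have "isCont (B 0) 0"
    using continuous_on_eq_continuous_at[OF open_ball, of 0 "4/27" "B 0"] holomorphic_on_imp_continuous_on[OF hol] by simp
  then obtain d where d: "d > 0" "\<And>x. dist x 0 < d \<Longrightarrow> dist (B 0 x) (B 0 0) < 1/2"
    unfolding continuous_at_eps_delta by (meson zero_less_divide_1_iff zero_less_numeral)
  define s where "s = min d (4/27)"
  have s: "s > 0" using d by (simp add: s_def)
  have near: "B 0 z = g0 z" if "z \<in> ball 0 s" for z
  proof -
    have zB: "z \<in> BB" and zd: "dist z 0 < d" using that by (auto simp: s_def dist_commute)
    have "norm (B 0 z) \<le> 1/2" using d(2)[OF zd] B00 by (simp add: dist_norm)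
    then show ?thesis using root_unique[of z "B 0 z"] zB eq[OF zB] by simp
  qed
  fix z assume z: "z \<in> BB"
  show "B 0 z = g0 z"
    by (rule analytic_continuation_open[where s="ball 0 s" and s'=BB])
       (use s near z hol g0_holo in \<open>auto simp: s_def\<close>)
qed

lemma unique_all:
  assumes "admissible B"
  shows "\<And>z. z \<in> BB \<Longrightarrow> B k z = SS k z"
proof (induction k rule: less_induct)
  case (less k)
  show ?case
  proof (cases k)
    case 0 then show ?thesis using unique0[OF assms less.prems] by (simp add: SS_0)
  next
    case (Suc m)
    have sol: "formally_solves_ODE B (4/27)"
      using assms unfolding admissible_def r_eq by auto
    note z = less.prems
    have IH: "\<And>j w. j \<le> m \<Longrightarrow> w \<in> BB \<Longrightarrow> B j w = SS j w" using less Suc by auto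
    have B0: "B 0 z = SS 0 z" using IH[of 0 z] z by simp
    have e1: "\<And>j w. j \<le> m \<Longrightarrow> w \<in> BB \<Longrightarrow> euler_op (B j) w = euler_op (SS j) w"
      by (rule euler_cong) (use IH in auto)
    have "RHS B z $ m = RHS SS z $ m"
    proof (rule RHS_agree)
      fix j assume j: "j \<le> m"
      show "B j z = SS j z" using IH[OF j z] .
      show "euler_op (B j) z = euler_op (SS j) z" using e1[OF j z] .
      show "euler_op (euler_op (B j)) z = euler_op (euler_op (SS j)) z"
        by (rule euler_cong) (use e1[OF j] z in auto)
    qed
    moreover have "LHS B z $ Suc m = RHS B z $ m" using sol z unfolding solves_iff by auto
    moreover have "LHS SS z $ Suc m = RHS SS z $ m" using SS_solves z unfolding solves_iff by auto
    moreover have "LHS (trunc m B) z $ Suc m = LHS (trunc m SS) z $ Suc m"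
      by (rule LHS_agree) (use IH z in \<open>auto simp: trunc_def\<close>)
    ultimately have "LHS (trunc m SS) z $ Suc m + (3 * z * (1 + g0 z)^2 - 1) * B (Suc m) z =
        LHS (trunc m SS) z $ Suc m + (3 * z * (1 + g0 z)^2 - 1) * SS (Suc m) z"
      using LHS_step[of B z m] LHS_step[of SS z m] B0 by (simp add: SS_0)
    then have "(3 * z * (1 + g0 z)^2 - 1) * B (Suc m) z = (3 * z * (1 + g0 z)^2 - 1) * SS (Suc m) z"
      by (rule add_left_imp_eq)
    then show ?thesis using Suc den_ne[OF z] by simp
  qed
qed




lemma at_zero:
  assumes "admissible A"
  shows "A k 0 = 0"
proof -
  have sol: "formally_solves_ODE A (4/27)"
    using assms unfolding admissible_def r_eq by auto
  have z0: "(0::complex) \<in> BB" by simp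
  show ?thesis
  proof (cases k)
    case 0
    have "LHS A 0 $ 0 = 0" using sol z0 unfolding solves_iff by blast
    then show ?thesis using 0 by (simp add: LHS_0)
  next
    case (Suc m)
    have "D1A A 0 = 0" by (simp add: D1A_def euler_op_def fps_eq_iff)
    moreover have "D2A A 0 = 0" by (simp add: D2A_def euler_op_def fps_eq_iff)
    ultimately have "RHS A 0 = 0" by (simp add: RHS_def)
    moreover have "LHS A 0 $ Suc m = - A (Suc m) 0" by (simp add: LHS_def FA_def)
    moreover have "LHS A 0 $ Suc m = RHS A 0 $ m" using sol z0 unfolding solves_iff by auto
    ultimately show ?thesis using Suc by simp
  qed
qed

theorem proposition2:
  shows "(\<exists>A. admissible A \<and>
            (\<forall>B. admissible B \<longrightarrow> (\<forall>k. \<forall>z \<in> ball 0 (2^2 / 3^3). B k z = A k z)))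
       \<and> (\<forall>A. admissible A \<longrightarrow>
            (\<forall>k. \<exists>p q :: complex poly.
                   \<forall>z \<in> ball 0 (2^2 / 3^3).
                     poly q (A 0 z) \<noteq> 0 \<and> A k z = poly p (A 0 z) / poly q (A 0 z))
            \<and> (\<forall>k. A k 0 = 0))"
proof (intro conjI allI impI)
  show "\<exists>A. admissible A \<and> (\<forall>B. admissible B \<longrightarrow> (\<forall>k. \<forall>z \<in> ball 0 (2^2 / 3^3). B k z = A k z))"
    using SS_admissible unique_all unfolding r_eq by blast
next
  fix A k assume A: "admissible A"
  show "A k 0 = 0" by (rule at_zero[OF A])
next
  fix A k assume A: "admissible A"
  obtain p q where pq: "\<forall>z\<in>BB. poly q (g0 z) \<noteq> 0 \<and> SS k z = poly p (g0 z) / poly q (g0 z)"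
    using ratA_SS[of k] unfolding ratA_def by auto
  have "\<forall>z\<in>BB. poly q (A 0 z) \<noteq> 0 \<and> A k z = poly p (A 0 z) / poly q (A 0 z)"
    using pq unique_all[OF A] unique0[OF A] by auto
  then show "\<exists>p q :: complex poly. \<forall>z \<in> ball 0 (2^2 / 3^3).
                     poly q (A 0 z) \<noteq> 0 \<and> A k z = poly p (A 0 z) / poly q (A 0 z)"
    unfolding r_eq by blast
qed


end
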